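(* Every most compact MP-tree on $S$ has at most $n-2$ unlabelled nodes.
   Context: Fix integers $n\ge 2$ and $m\ge 1$, and finite nonempty sets $\Sigma_1,\dots,\Sigma_m$ (the states of characters $1,\dots,m$). A set of species $S=\{S_1,\dots,S_n\}$ is given, each species $S_j$ being an $m$-tuple $(s_{j,1},\dots,s_{j,m})\in\Sigma_1\times\cdots\times\Sigma_m$. A tree on $S$ is a finite unrooted tree (connected acyclic undirected graph) $T$ together with an injective map assigning each species $S_j$ to a node of $T$. Nodes receiving a species are called labelled, the others unlabelled. A fit of $T$ is a map $f$ assigning to every node $v$ a tuple $f(v)\in\Sigma_1\times\cdots\times\Sigma_m$ such that $f(v)=S_j$ whenever $v$ is labelled with $S_j$. The cost of $f$ is $\sum_{\{u,v\}\in E(T)} h(f(u),f(v))$, where $h$ is the Hamming distance. The MP-cost $\mathrm{MP}(T)$ is the minimum cost over all fits of $T$. An MP-tree on $S$ is a tree on $S$ whose MP-cost equals the minimum of $\mathrm{MP}(T)$ over all trees $T$ on $S$. A most compact MP-tree on $S$ is an MP-tree on $S$ having the minimum number of nodes among all MP-trees on $S$. *)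

theory Defs
  imports Main
begin

text \<open>Species are indexed by j < n, characters by i < m. A species/state tuple is a
function nat => 'a whose values at i < m are the character states.
Species data: Sp j i is the state of character i in species j.
A tree on S: node set V (finite set of nat), edges E as ordered pairs (u,v) with u < v
(each undirected edge {u,v} stored once), labelling lab mapping species j < n to nodes.\<close>

definition adj :: "(nat \<times> nat) set \<Rightarrow> nat \<Rightarrow> nat \<Rightarrow> bool" where
  "adj E u v \<longleftrightarrow> (u, v) \<in> E \<or> (v, u) \<in> E"

definition connected_graph :: "nat set \<Rightarrow> (nat \<times> nat) set \<Rightarrow> bool" where
  "connected_graph V E \<longleftrightarrow> (\<forall>u\<in>V. \<forall>v\<in>V. (adj E)\<^sup>*\<^sup>* u v)"

definition is_cycle :: "(nat \<times> nat) set \<Rightarrow> nat list \<Rightarrow> bool" where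
  "is_cycle E cs \<longleftrightarrow> length cs \<ge> 3 \<and> distinct cs
     \<and> (\<forall>k. Suc k < length cs \<longrightarrow> adj E (cs ! k) (cs ! Suc k))
     \<and> adj E (last cs) (hd cs)"

definition acyclic_graph :: "(nat \<times> nat) set \<Rightarrow> bool" where
  "acyclic_graph E \<longleftrightarrow> (\<nexists>cs. is_cycle E cs)"

definition is_tree :: "nat set \<Rightarrow> (nat \<times> nat) set \<Rightarrow> bool" where
  "is_tree V E \<longleftrightarrow> finite V \<and> V \<noteq> {}
     \<and> (\<forall>(u, v)\<in>E. u < v \<and> u \<in> V \<and> v \<in> V)
     \<and> connected_graph V E \<and> acyclic_graph E"

definition tree_on :: "nat \<Rightarrow> nat set \<Rightarrow> (nat \<times> nat) set \<Rightarrow> (nat \<Rightarrow> nat) \<Rightarrow> bool" where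
  "tree_on n V E lab \<longleftrightarrow> is_tree V E \<and> lab ` {..<n} \<subseteq> V \<and> inj_on lab {..<n}"

definition hamming :: "nat \<Rightarrow> (nat \<Rightarrow> 'a) \<Rightarrow> (nat \<Rightarrow> 'a) \<Rightarrow> nat" where
  "hamming m x y = card {i. i < m \<and> x i \<noteq> y i}"

definition is_fit ::
  "nat \<Rightarrow> (nat \<Rightarrow> 'a set) \<Rightarrow> nat \<Rightarrow> (nat \<Rightarrow> nat \<Rightarrow> 'a) \<Rightarrow> nat set \<Rightarrow> (nat \<Rightarrow> nat)
    \<Rightarrow> (nat \<Rightarrow> nat \<Rightarrow> 'a) \<Rightarrow> bool" where
  "is_fit m \<Sigma> n Sp V lab f \<longleftrightarrow>
     (\<forall>v\<in>V. \<forall>i<m. f v i \<in> \<Sigma> i) \<and> (\<forall>j<n. \<forall>i<m. f (lab j) i = Sp j i)"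

definition fit_cost :: "nat \<Rightarrow> (nat \<times> nat) set \<Rightarrow> (nat \<Rightarrow> nat \<Rightarrow> 'a) \<Rightarrow> nat" where
  "fit_cost m E f = (\<Sum>(u, v)\<in>E. hamming m (f u) (f v))"

definition MP_cost ::
  "nat \<Rightarrow> (nat \<Rightarrow> 'a set) \<Rightarrow> nat \<Rightarrow> (nat \<Rightarrow> nat \<Rightarrow> 'a) \<Rightarrow> nat set \<Rightarrow> (nat \<times> nat) set
    \<Rightarrow> (nat \<Rightarrow> nat) \<Rightarrow> nat" where
  "MP_cost m \<Sigma> n Sp V E lab = (LEAST c. \<exists>f. is_fit m \<Sigma> n Sp V lab f \<and> fit_cost m E f = c)"

definition opt_MP :: "nat \<Rightarrow> (nat \<Rightarrow> 'a set) \<Rightarrow> nat \<Rightarrow> (nat \<Rightarrow> nat \<Rightarrow> 'a) \<Rightarrow> nat" where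
  "opt_MP m \<Sigma> n Sp = (LEAST c. \<exists>V E lab. tree_on n V E lab \<and> MP_cost m \<Sigma> n Sp V E lab = c)"

definition MP_tree ::
  "nat \<Rightarrow> (nat \<Rightarrow> 'a set) \<Rightarrow> nat \<Rightarrow> (nat \<Rightarrow> nat \<Rightarrow> 'a) \<Rightarrow> nat set \<Rightarrow> (nat \<times> nat) set
    \<Rightarrow> (nat \<Rightarrow> nat) \<Rightarrow> bool" where
  "MP_tree m \<Sigma> n Sp V E lab \<longleftrightarrow> tree_on n V E lab \<and> MP_cost m \<Sigma> n Sp V E lab = opt_MP m \<Sigma> n Sp"

definition most_compact_MP_tree ::
  "nat \<Rightarrow> (nat \<Rightarrow> 'a set) \<Rightarrow> nat \<Rightarrow> (nat \<Rightarrow> nat \<Rightarrow> 'a) \<Rightarrow> nat set \<Rightarrow> (nat \<times> nat) set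
    \<Rightarrow> (nat \<Rightarrow> nat) \<Rightarrow> bool" where
  "most_compact_MP_tree m \<Sigma> n Sp V E lab \<longleftrightarrow> MP_tree m \<Sigma> n Sp V E lab
     \<and> (\<forall>V' E' lab'. MP_tree m \<Sigma> n Sp V' E' lab' \<longrightarrow> card V \<le> card V')"

end

theory Submission
  imports Defs
begin


fun walk :: "(nat \<times> nat) set \<Rightarrow> nat list \<Rightarrow> bool" where
  "walk E [] = True"
| "walk E [x] = True"
| "walk E (x # y # r) = (adj E x y \<and> walk E (y # r))"

lemma walk_nth: "walk E xs \<longleftrightarrow> (\<forall>k. Suc k < length xs \<longrightarrow> adj E (xs ! k) (xs ! Suc k))"
proof (induction E xs rule: walk.induct)
  case (3 E x y r)
  show ?case
  proof
    assume "walk E (x # y # r)"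
    then show "\<forall>k. Suc k < length (x#y#r) \<longrightarrow> adj E ((x#y#r) ! k) ((x#y#r) ! Suc k)"
      using 3 by (auto simp: nth_Cons split: nat.splits)
  next
    assume H: "\<forall>k. Suc k < length (x#y#r) \<longrightarrow> adj E ((x#y#r) ! k) ((x#y#r) ! Suc k)"
    have "adj E x y" using H[rule_format, of 0] by simp
    moreover have "\<forall>k. Suc k < length (y#r) \<longrightarrow> adj E ((y#r) ! k) ((y#r) ! Suc k)"
    proof (intro allI impI)
      fix k assume "Suc k < length (y#r)"
      then show "adj E ((y#r) ! k) ((y#r) ! Suc k)" using H[rule_format, of "Suc k"] by simp
    qed
    ultimately show "walk E (x # y # r)" using 3 by simp
  qed
qed auto

lemma walk_append: "walk E (xs @ ys) \<longleftrightarrow> walk E xs \<and> walk E ys \<and> (xs \<noteq> [] \<and> ys \<noteq> [] \<longrightarrow> adj E (last xs) (hd ys))"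
proof (induction xs)
  case Nil then show ?case by simp
next
  case (Cons x xs)
  then show ?case by (cases xs; cases ys; auto)
qed

lemma adj_mono: "adj E u v \<Longrightarrow> E \<subseteq> F \<Longrightarrow> adj F u v"
  by (auto simp: adj_def)

lemma walk_mono: "walk E xs \<Longrightarrow> E \<subseteq> F \<Longrightarrow> walk F xs"
  by (induction E xs rule: walk.induct) (auto intro: adj_mono)

lemma adj_sym: "adj E u v = adj E v u" by (auto simp: adj_def)

lemma rtranclp_adj_sym: "(adj E)\<^sup>*\<^sup>* u v \<Longrightarrow> (adj E)\<^sup>*\<^sup>* v u"
proof (induction rule: rtranclp_induct)
  case (step y z)
  then show ?case using adj_sym by (metis converse_rtranclp_into_rtranclp)
qed auto

lemma walk_rtranclp: "walk E ps \<Longrightarrow> ps \<noteq> [] \<Longrightarrow> (adj E)\<^sup>*\<^sup>* (hd ps) (last ps)"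
  by (induction E ps rule: walk.induct) (auto intro: converse_rtranclp_into_rtranclp)

lemma rtranclp_walk: "(adj E)\<^sup>*\<^sup>* x y \<Longrightarrow> \<exists>ps. ps \<noteq> [] \<and> hd ps = x \<and> last ps = y \<and> walk E ps \<and> distinct ps"
proof (induction rule: rtranclp_induct)
  case base
  then show ?case by (intro exI[of _ "[x]"]) simp
next
  case (step y z)
  then obtain ps where ps: "ps \<noteq> []" "hd ps = x" "last ps = y" "walk E ps" "distinct ps" by blast
  show ?case
  proof (cases "z \<in> set ps")
    case True
    then obtain xs ys where sp: "ps = xs @ z # ys" by (meson split_list)
    have "walk E ((xs @ [z]) @ ys)" using ps sp by simp
    then have w: "walk E (xs @ [z])" by (metis walk_append)
    show ?thesis
      by (intro exI[of _ "xs @ [z]"]) (use ps sp w in \<open>cases xs; auto\<close>)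
  next
    case False
    have "walk E (ps @ [z])" using ps step by (simp add: walk_append)
    then show ?thesis using ps False by (intro exI[of _ "ps @ [z]"]) auto
  qed
qed

lemma is_cycle_walk: "is_cycle E cs \<longleftrightarrow> length cs \<ge> 3 \<and> distinct cs \<and> walk E cs \<and> adj E (last cs) (hd cs)"
  by (simp add: is_cycle_def walk_nth)

definition rm :: "(nat \<times> nat) set \<Rightarrow> nat \<Rightarrow> (nat \<times> nat) set" where
  "rm E v = {e\<in>E. fst e \<noteq> v \<and> snd e \<noteq> v}"

definition nb :: "(nat \<times> nat) set \<Rightarrow> nat \<Rightarrow> nat set" where
  "nb E v = {y. adj E v y}"

lemma adj_rm: "adj (rm E v) a b \<longleftrightarrow> adj E a b \<and> a \<noteq> v \<and> b \<noteq> v"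
  by (auto simp: adj_def rm_def)

lemma rm_sub: "rm E v \<subseteq> E" by (auto simp: rm_def)

lemma walk_avoid: "walk E xs \<Longrightarrow> x \<notin> set xs \<Longrightarrow> walk (rm E x) xs"
  by (induction E xs rule: walk.induct) (auto simp: adj_rm)

lemma cycle_mono: "acyclic_graph F \<Longrightarrow> E \<subseteq> F \<Longrightarrow> acyclic_graph E"
  unfolding acyclic_graph_def is_cycle_walk using walk_mono adj_mono by blast

lemma noloop: "\<forall>(u,w)\<in>E. u < w \<Longrightarrow> \<not> adj E u u"
  by (auto simp: adj_def)

lemma L2:
  assumes "acyclic_graph E" "\<forall>(u,w)\<in>E. u<w" "(c,d)\<in>E"
  shows "\<not> (adj (E - {(c,d)}))\<^sup>*\<^sup>* c d"
proof
  assume "(adj (E - {(c,d)}))\<^sup>*\<^sup>* c d"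
  then obtain ps where ps: "ps\<noteq>[]" "hd ps = c" "last ps = d" "walk (E-{(c,d)}) ps" "distinct ps"
    using rtranclp_walk by blast
  have cd: "c < d" using assms by auto
  have "length ps \<ge> 3"
  proof (rule ccontr)
    assume "\<not> ?thesis"
    moreover have "length ps > 0" using ps(1) by simp
    ultimately have "length ps = 1 \<or> length ps = 2" by linarith
    then show False
    proof
      assume "length ps = 1"
      then obtain x where "ps = [x]" by (cases ps) auto
      then show False using ps cd by simp
    next
      assume "length ps = 2"
      then have "length ps = Suc (Suc 0)" by simp
      then obtain x y where "ps = [x, y]" by (auto simp: length_Suc_conv)
      then show False using ps cd assms(2) by (auto simp: adj_def)
    qed
  qed
  moreover have "walk E ps" using ps(4) walk_mono by blast
  moreover have "adj E (last ps) (hd ps)" using ps assms by (auto simp: adj_def)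
  ultimately have "is_cycle E ps" using ps by (simp add: is_cycle_walk)
  then show False using assms(1) by (auto simp: acyclic_graph_def)
qed

lemma L3:
  assumes "is_cycle E cs"
  shows "\<exists>(c,d)\<in>E. (adj (E - {(c,d)}))\<^sup>*\<^sup>* c d"
proof -
  from assms have len: "length cs \<ge> 3" and dist: "distinct cs" and w: "walk E cs"
    and cl: "adj E (last cs) (hd cs)" by (auto simp: is_cycle_walk)
  obtain x0 t where cs0: "cs = x0 # t" using len by (cases cs) auto
  obtain x1 r where "t = x1 # r" using len cs0 by (cases t) auto
  with cs0 have cs: "cs = x0 # x1 # r" by simp
  have "adj E x0 x1" using w cs by simp
  then obtain e where e: "e \<in> E" "e = (x0,x1) \<or> e = (x1,x0)" by (auto simp: adj_def)
  have r_ne: "r \<noteq> []" using len cs by auto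
  have "walk (rm E x0) (x1 # r)" using walk_avoid w cs dist by simp
  moreover have "rm E x0 \<subseteq> E - {e}" using e by (auto simp: rm_def)
  ultimately have w1: "walk (E - {e}) (x1 # r)" using walk_mono by blast
  have lc: "last cs = last r" using cs r_ne by simp
  have "last r \<in> set r" using r_ne by simp
  then have ln: "last r \<noteq> x1" "last r \<noteq> x0" using dist cs by auto
  have "adj (E-{e}) (last r) x0" using cl lc cs ln e by (auto simp: adj_def)
  then have "walk (E - {e}) ((x1 # r) @ [x0])" using w1 r_ne by (simp only: walk_append) simp
  then have "(adj (E-{e}))\<^sup>*\<^sup>* x1 x0" using walk_rtranclp[of "E-{e}" "(x1 # r) @ [x0]"] by simp
  then have "(adj (E-{e}))\<^sup>*\<^sup>* x0 x1" using rtranclp_adj_sym by blast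
  then show ?thesis using e \<open>(adj (E-{e}))\<^sup>*\<^sup>* x1 x0\<close> by auto
qed

lemma L1:
  assumes fin: "finite V" and ne: "V \<noteq> {}" and ori: "\<forall>(u,w)\<in>E. u<w \<and> u\<in>V \<and> w\<in>V"
    and deg: "\<forall>x\<in>V. \<exists>y z. y\<noteq>z \<and> adj E x y \<and> adj E x z"
  shows "\<not> acyclic_graph E"
proof -
  let ?P = "\<lambda>ps. ps \<noteq> [] \<and> distinct ps \<and> set ps \<subseteq> V \<and> walk E ps"
  obtain x where x: "x \<in> V" using ne by blast
  have P0: "?P [x]" using x by simp
  have bound: "\<forall>ps. ?P ps \<longrightarrow> length ps < Suc (card V)"
  proof (intro allI impI)
    fix ps assume "?P ps"
    then have "card (set ps) \<le> card V" using fin card_mono by blast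
    then show "length ps < Suc (card V)" using \<open>?P ps\<close> distinct_card by fastforce
  qed
  obtain ps where P: "?P ps" and mx: "\<forall>qs. ?P qs \<longrightarrow> length qs \<le> length ps"
    using ex_has_greatest_nat[of ?P "[x]" length "Suc (card V)", OF P0 bound] by blast
  have lV: "last ps \<in> V" using P by auto
  obtain y z where yz: "y \<noteq> z" "adj E (last ps) y" "adj E (last ps) z" using deg lV by blast
  obtain y' where y': "adj E (last ps) y'" "length ps \<ge> 2 \<longrightarrow> y' \<noteq> ps ! (length ps - 2)"
    using yz by metis
  have y'V: "y' \<in> V" using y'(1) ori by (auto simp: adj_def)
  have nl: "\<not> adj E u u" for u using ori by (auto simp: adj_def)
  show ?thesis
  proof (cases "y' \<in> set ps")
    case False
    have "walk E (ps @ [y'])" using P y' by (simp add: walk_append)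
    then have "?P (ps @ [y'])" using P False y'V by simp
    then have "length (ps @ [y']) \<le> length ps" using mx by blast
    then show ?thesis by simp
  next
    case True
    then obtain xs ys where sp: "ps = xs @ y' # ys" by (meson split_list)
    have ysne: "ys \<noteq> []"
    proof
      assume "ys = []"
      then have "last ps = y'" using sp by simp
      then show False using y' nl by metis
    qed
    have lst: "last (y' # ys) = last ps" using sp ysne by simp
    have len: "length (y' # ys) \<ge> 3"
    proof (rule ccontr)
      assume "\<not> ?thesis"
      moreover have "length ys > 0" using ysne by simp
      moreover have "length (y' # ys) = Suc (length ys)" by simp
      ultimately have "length ys = Suc 0" by linarith
      then obtain w where "ys = [w]" by (auto simp: length_Suc_conv)
      then have "ps ! (length ps - 2) = y'" "length ps \<ge> 2" using sp by (auto simp: nth_append)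
      then show False using y' by simp
    qed
    have "walk E (y' # ys)" using P sp walk_append by metis
    moreover have "distinct (y' # ys)" using P sp by simp
    moreover have "adj E (last (y' # ys)) (hd (y' # ys))" using lst y' by simp
    ultimately have "is_cycle E (y' # ys)" using len by (simp add: is_cycle_walk)
    then show ?thesis by (auto simp: acyclic_graph_def)
  qed
qed

lemma forest:
  "finite V \<Longrightarrow> \<forall>(u,w)\<in>E. u<w \<and> u\<in>V \<and> w\<in>V \<Longrightarrow> acyclic_graph E \<Longrightarrow> card E \<le> card V - 1"
proof (induction V arbitrary: E rule: finite_psubset_induct)
  case (psubset V)
  show ?case
  proof (cases "V = {}")
    case True
    then have "E = {}" using psubset.prems by auto
    then show ?thesis by simp
  next
    case False
    have "\<exists>x\<in>V. \<not>(\<exists>y z. y\<noteq>z \<and> adj E x y \<and> adj E x z)"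
      using L1[OF psubset.hyps(1) False] psubset.prems by blast
    then obtain x where x: "x\<in>V" and nd: "\<forall>y z. adj E x y \<and> adj E x z \<longrightarrow> y = z" by blast
    let ?E' = "rm E x"
    have sub: "V - {x} \<subset> V" using x by auto
    have ori': "\<forall>(u,w)\<in>?E'. u<w \<and> u\<in>V-{x} \<and> w\<in>V-{x}" using psubset.prems by (auto simp: rm_def)
    have ac': "acyclic_graph ?E'" using cycle_mono[OF psubset.prems(2) rm_sub] .
    have IH: "card ?E' \<le> card (V - {x}) - 1" using psubset.IH[OF sub ori' ac'] .
    have finE: "finite E"
    proof (rule finite_subset)
      show "E \<subseteq> V \<times> V" using psubset.prems by auto
      show "finite (V \<times> V)" using psubset.hyps by simp
    qed
    let ?I = "{e\<in>E. fst e = x \<or> snd e = x}"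
    have EU: "E = ?E' \<union> ?I" by (auto simp: rm_def)
    have "\<forall>e1\<in>?I. \<forall>e2\<in>?I. e1 = e2"
    proof (intro ballI)
      fix e1 e2 assume e1: "e1 \<in> ?I" and e2: "e2 \<in> ?I"
      obtain a1 b1 where [simp]: "e1 = (a1,b1)" by fastforce
      obtain a2 b2 where [simp]: "e2 = (a2,b2)" by fastforce
      have o1: "adj E x (if a1 = x then b1 else a1)" using e1 by (auto simp: adj_def)
      have o2: "adj E x (if a2 = x then b2 else a2)" using e2 by (auto simp: adj_def)
      have eq: "(if a1 = x then b1 else a1) = (if a2 = x then b2 else a2)" using nd o1 o2 by blast
      have "a1 < b1" "a2 < b2" using e1 e2 psubset.prems(1) by auto
      then show "e1 = e2" using e1 e2 eq by (auto split: if_splits)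
    qed
    note allI2 = this
    have finI: "finite ?I" using finE by simp
    have cI0: "card ?I \<le> Suc 0" unfolding card_le_Suc0_iff_eq[OF finI] by (rule allI2)
    then have cI: "card ?I \<le> 1" by simp
    have "card E \<le> card ?E' + card ?I" using card_Un_le[of ?E' ?I] unfolding EU[symmetric] .
    then have cE: "card E \<le> card ?E' + 1" using cI by linarith
    show ?thesis
    proof (cases "V - {x} = {}")
      case True
      then have "V = {x}" using x by auto
      then have "E = {}" using psubset.prems by auto
      then show ?thesis by simp
    next
      case False
      then have "card (V - {x}) \<ge> 1" using psubset.hyps
        by (simp add: Suc_leI card_gt_0_iff)
      moreover have "card (V - {x}) = card V - 1" using x psubset.hyps by simp
      ultimately show ?thesis using IH cE by linarith
    qed
  qed
qed

lemma handshake: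
  assumes fin: "finite V" and ori: "\<forall>(u,w)\<in>E. u<w \<and> u\<in>V \<and> w\<in>V"
  shows "(\<Sum>v\<in>V. card (nb E v)) = 2 * card E"
proof -
  have finE: "finite E"
  proof (rule finite_subset)
    show "E \<subseteq> V \<times> V" using ori by auto
    show "finite (V \<times> V)" using fin by simp
  qed
  have split: "card (nb E v) = card {e\<in>E. fst e = v} + card {e\<in>E. snd e = v}" for v
  proof -
    have eq: "nb E v = snd ` {e\<in>E. fst e = v} \<union> fst ` {e\<in>E. snd e = v}"
      by (auto simp: nb_def adj_def image_iff)
    have disj: "snd ` {e\<in>E. fst e = v} \<inter> fst ` {e\<in>E. snd e = v} = {}"
    proof -
      { fix w assume "w \<in> snd ` {e\<in>E. fst e = v}" "w \<in> fst ` {e\<in>E. snd e = v}"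
        then obtain e e' where "e\<in>E" "fst e = v" "w = snd e" "e'\<in>E" "snd e' = v" "w = fst e'" by auto
        then have "(v,w)\<in>E" "(w,v)\<in>E" by (metis prod.collapse)+
        then have False using ori[rule_format, of "(v,w)"] ori[rule_format, of "(w,v)"] by auto }
      then show ?thesis by blast
    qed
    have i1: "inj_on snd {e\<in>E. fst e = v}" by (auto simp: inj_on_def prod_eq_iff)
    have i2: "inj_on fst {e\<in>E. snd e = v}" by (auto simp: inj_on_def prod_eq_iff)
    show ?thesis unfolding eq
      using card_Un_disjoint[OF _ _ disj] finE card_image[OF i1] card_image[OF i2] by simp
  qed
  have "fst ` E \<subseteq> V" using ori by auto
  then have "(\<Sum>v\<in>V. sum (\<lambda>_. 1::nat) {e\<in>E. fst e = v}) = sum (\<lambda>_. 1) E"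
    by (rule sum.group[OF finE fin])
  then have s1: "(\<Sum>v\<in>V. card {e\<in>E. fst e = v}) = card E" by simp
  have "snd ` E \<subseteq> V" using ori by auto
  then have "(\<Sum>v\<in>V. sum (\<lambda>_. 1::nat) {e\<in>E. snd e = v}) = sum (\<lambda>_. 1) E"
    by (rule sum.group[OF finE fin])
  then have s2: "(\<Sum>v\<in>V. card {e\<in>E. snd e = v}) = card E" by simp
  show ?thesis using s1 s2 by (simp add: split sum.distrib)
qed

lemma conn_remove:
  assumes conn: "connected_graph V E" and v: "v \<in> V"
    and keep: "\<forall>y z. adj E y z \<and> y \<noteq> v \<and> z \<noteq> v \<longrightarrow> adj E' y z"
    and nbc: "\<forall>a\<in>nb E v. \<forall>b\<in>nb E v. (adj E')\<^sup>*\<^sup>* a b"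
  shows "connected_graph (V - {v}) E'"
  unfolding connected_graph_def
proof (intro ballI)
  fix u w assume u: "u \<in> V - {v}" and w: "w \<in> V - {v}"
  have "(adj E)\<^sup>*\<^sup>* u w" using conn u w by (auto simp: connected_graph_def)
  then have "(w \<noteq> v \<longrightarrow> (adj E')\<^sup>*\<^sup>* u w) \<and> (w = v \<longrightarrow> (\<forall>a\<in>nb E v. (adj E')\<^sup>*\<^sup>* u a))"
  proof (induction rule: rtranclp_induct)
    case base then show ?case using u by simp
  next
    case (step y z)
    show ?case
    proof (cases "y = v")
      case True
      then have zn: "z \<in> nb E v" using step(2) by (simp add: nb_def)
      show ?thesis using step.IH True zn nbc by (cases "z = v") auto
    next
      case False
      then have uy: "(adj E')\<^sup>*\<^sup>* u y" using step.IH by simp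
      show ?thesis
      proof (cases "z = v")
        case True
        then have yn: "y \<in> nb E v" using step(2) adj_sym by (simp add: nb_def)
        show ?thesis
        proof (intro conjI impI ballI)
          fix a assume "a \<in> nb E v"
          then show "(adj E')\<^sup>*\<^sup>* u a" using uy yn nbc by (meson rtranclp_trans)
        qed (use True in simp)
      next
        case False
        then have "adj E' y z" using keep step(2) \<open>y \<noteq> v\<close> by blast
        then show ?thesis using uy False by (auto intro: rtranclp.rtrancl_into_rtrancl)
      qed
    qed
  qed
  then show "(adj E')\<^sup>*\<^sup>* u w" using w by simp
qed

lemma rtranclp_lift: "(\<And>y z. R y z \<Longrightarrow> S\<^sup>*\<^sup>* y z) \<Longrightarrow> R\<^sup>*\<^sup>* x w \<Longrightarrow> S\<^sup>*\<^sup>* x w"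
proof -
  assume H: "\<And>y z. R y z \<Longrightarrow> S\<^sup>*\<^sup>* y z"
  show "R\<^sup>*\<^sup>* x w \<Longrightarrow> S\<^sup>*\<^sup>* x w"
    by (induction rule: rtranclp_induct) (auto dest: H intro: rtranclp_trans)
qed

lemma hamming_sym: "hamming m x y = hamming m y x"
  unfolding hamming_def by (metis (no_types, lifting))

lemma hamming_tri: "hamming m x z \<le> hamming m x y + hamming m y z"
proof -
  have "{i. i < m \<and> x i \<noteq> z i} \<subseteq> {i. i < m \<and> x i \<noteq> y i} \<union> {i. i < m \<and> y i \<noteq> z i}" by auto
  then have "card {i. i < m \<and> x i \<noteq> z i} \<le> card ({i. i < m \<and> x i \<noteq> y i} \<union> {i. i < m \<and> y i \<noteq> z i})"
    by (intro card_mono) auto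
  also have "\<dots> \<le> hamming m x y + hamming m y z" unfolding hamming_def by (rule card_Un_le)
  finally show ?thesis unfolding hamming_def .
qed


theorem lemma4:
  fixes m n :: nat and \<Sigma> :: "nat \<Rightarrow> 'a set" and Sp :: "nat \<Rightarrow> nat \<Rightarrow> 'a"
    and V :: "nat set" and E :: "(nat \<times> nat) set" and lab :: "nat \<Rightarrow> nat"
  assumes "n \<ge> 2" and "m \<ge> 1"
    and "\<And>i. i < m \<Longrightarrow> finite (\<Sigma> i) \<and> \<Sigma> i \<noteq> {}"
    and "\<And>j i. j < n \<Longrightarrow> i < m \<Longrightarrow> Sp j i \<in> \<Sigma> i"
    and "\<And>j k. j < n \<Longrightarrow> k < n \<Longrightarrow> j \<noteq> k \<Longrightarrow> \<exists>i<m. Sp j i \<noteq> Sp k i"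
    and "most_compact_MP_tree m \<Sigma> n Sp V E lab"
  shows "card (V - lab ` {..<n}) \<le> n - 2"
proof -
  have mp: "MP_tree m \<Sigma> n Sp V E lab"
    and minc: "\<And>V' E' lab'. MP_tree m \<Sigma> n Sp V' E' lab' \<Longrightarrow> card V \<le> card V'"
    using assms(6) by (auto simp: most_compact_MP_tree_def)
  have tr: "tree_on n V E lab" and cost: "MP_cost m \<Sigma> n Sp V E lab = opt_MP m \<Sigma> n Sp"
    using mp by (auto simp: MP_tree_def)
  have finV: "finite V" and ori: "\<forall>(u,w)\<in>E. u<w \<and> u\<in>V \<and> w\<in>V" and conn: "connected_graph V E"
    and acyc: "acyclic_graph E" and labV: "lab ` {..<n} \<subseteq> V" and inj: "inj_on lab {..<n}"
    using tr by (auto simp: tree_on_def is_tree_def)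
  define L where "L = lab ` {..<n}"
  have cardL: "card L = n" using inj by (simp add: L_def card_image)
  have LV: "L \<subseteq> V" using labV L_def by simp
  have cardV: "card V \<ge> 2" using card_mono[OF finV LV] cardL assms(1) by linarith
  have finE: "finite E"
  proof (rule finite_subset)
    show "E \<subseteq> V \<times> V" using ori by auto
    show "finite (V \<times> V)" using finV by simp
  qed
  have nl: "\<not> adj E u u" for u using ori by (auto simp: adj_def)
  have ori2: "\<forall>(u,w)\<in>E. u<w" using ori by auto
  have adjV: "w \<in> V" if "adj E u w" for u w using that ori by (auto simp: adj_def)
  have nbV: "nb E v \<subseteq> V" for v using adjV by (auto simp: nb_def)
  have finnb: "finite (nb E v)" for v using finite_subset[OF nbV finV] .

  define f0 where "f0 = (\<lambda>v i. if v \<in> L then Sp (inv_into {..<n} lab v) i else (SOME x. x \<in> \<Sigma> i))"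
  have "is_fit m \<Sigma> n Sp V lab f0"
    unfolding is_fit_def
  proof (intro conjI ballI allI impI)
    fix v i assume "v \<in> V" "i < m"
    show "f0 v i \<in> \<Sigma> i"
    proof (cases "v \<in> L")
      case True
      then obtain j where "j < n" "v = lab j" by (auto simp: L_def)
      then show ?thesis using True assms(4) inj \<open>i < m\<close> by (simp add: f0_def inv_into_f_f)
    next
      case False
      then show ?thesis using assms(3)[OF \<open>i < m\<close>] by (simp add: f0_def some_in_eq)
    qed
  next
    fix j i assume "j < n" "i < m"
    then show "f0 (lab j) i = Sp j i" using inj by (simp add: f0_def L_def inv_into_f_f)
  qed
  then have "\<exists>c f. is_fit m \<Sigma> n Sp V lab f \<and> fit_cost m E f = c" by blast
  then obtain f where f: "is_fit m \<Sigma> n Sp V lab f" and fc: "fit_cost m E f = MP_cost m \<Sigma> n Sp V E lab"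
    unfolding MP_cost_def
    using LeastI_ex[of "\<lambda>c. \<exists>f. is_fit m \<Sigma> n Sp V lab f \<and> fit_cost m E f = c"] by blast

  have reduce: "card V \<le> card V'"
    if t: "tree_on n V' E' lab" and sub: "V' \<subseteq> V" and le: "fit_cost m E' f \<le> fit_cost m E f" for V' E'
  proof -
    have f': "is_fit m \<Sigma> n Sp V' lab f" using f sub by (auto simp: is_fit_def)
    have "MP_cost m \<Sigma> n Sp V' E' lab \<le> fit_cost m E' f"
      unfolding MP_cost_def by (rule Least_le) (use f' in blast)
    also have "\<dots> \<le> opt_MP m \<Sigma> n Sp" using le fc cost by simp
    finally have a: "MP_cost m \<Sigma> n Sp V' E' lab \<le> opt_MP m \<Sigma> n Sp" .
    have b: "opt_MP m \<Sigma> n Sp \<le> MP_cost m \<Sigma> n Sp V' E' lab"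
      unfolding opt_MP_def by (rule Least_le) (use t in blast)
    have "MP_tree m \<Sigma> n Sp V' E' lab" using t a b by (simp add: MP_tree_def)
    then show ?thesis using minc by blast
  qed

  have deg1: "1 \<le> card (nb E v)" if v: "v \<in> V" for v
  proof -
    have "card (V - {v}) \<ge> 1" using cardV v finV by simp
    then obtain w where w: "w \<in> V" "w \<noteq> v"
      by (metis Diff_iff card.empty empty_iff insert_iff not_one_le_zero subsetI subset_antisym)
    have "(adj E)\<^sup>*\<^sup>* v w" using conn v w by (auto simp: connected_graph_def)
    then obtain y where "adj E v y" using w(2) by (metis converse_rtranclpE)
    then have "nb E v \<noteq> {}" by (auto simp: nb_def)
    then show ?thesis using finnb by (simp add: Suc_leI card_gt_0_iff)
  qed

  have deg3: "3 \<le> card (nb E v)" if v: "v \<in> V" and vL: "v \<notin> L" for v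
  proof (rule ccontr)
    assume "\<not> 3 \<le> card (nb E v)"
    then have c: "card (nb E v) = 1 \<or> card (nb E v) = 2" using deg1[OF v] by linarith
    have labV': "lab ` {..<n} \<subseteq> V - {v}" using LV vL L_def by auto
    have finV': "finite (V - {v})" using finV by simp
    have "0 \<in> {..<n}" using assms(1) by simp
    then have "lab 0 \<in> V - {v}" using labV' by blast
    then have neV': "V - {v} \<noteq> {}" by blast
    have cV': "card (V - {v}) < card V" by (rule card_Diff1_less[OF finV v])
    have keep0: "\<forall>y z. adj E y z \<and> y \<noteq> v \<and> z \<noteq> v \<longrightarrow> adj (rm E v) y z" by (simp add: adj_rm)
    have orirm: "\<forall>(u,w)\<in>rm E v. u<w \<and> u\<in>V-{v} \<and> w\<in>V-{v}" using ori by (auto simp: rm_def)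
    define g where "g = (\<lambda>(u::nat, w::nat). hamming m (f u) (f w))"
    have fcg: "fit_cost m X f = sum g X" for X by (simp add: fit_cost_def g_def)
    from c show False
    proof
      assume "card (nb E v) = 1"
      then obtain a where nbv: "nb E v = {a}" by (meson card_1_singletonE)
      have "is_tree (V - {v}) (rm E v)"
        unfolding is_tree_def
      proof (intro conjI)
        show "connected_graph (V - {v}) (rm E v)"
          using conn_remove[OF conn v keep0] nbv by simp
        show "acyclic_graph (rm E v)" using cycle_mono[OF acyc rm_sub] .
      qed (use finV' neV' orirm in auto)
      then have t: "tree_on n (V - {v}) (rm E v) lab" using labV' inj by (simp add: tree_on_def)
      have "fit_cost m (rm E v) f \<le> fit_cost m E f"
        unfolding fcg by (rule sum_mono2[OF finE rm_sub]) simp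
      then have "card V \<le> card (V - {v})" using reduce[OF t] by simp
      then show False using cV' by simp
    next
      assume "card (nb E v) = 2"
      then obtain a b where ab: "a \<noteq> b" and nbv: "nb E v = {a, b}" by (meson card_2_iff)
      have va: "adj E v a" and vb: "adj E v b" using nbv by (auto simp: nb_def)
      have aV: "a \<in> V" "b \<in> V" using va vb adjV by auto
      have av: "a \<noteq> v" "b \<noteq> v" using va vb nl by auto
      define ab' where "ab' = (min a b, max a b)"
      define E' where "E' = insert ab' (rm E v)"
      have adjab: "adj E' a b" by (auto simp: E'_def ab'_def adj_def min_def max_def)
      have rmE': "rm E v \<subseteq> E'" by (auto simp: E'_def)
      have keep: "\<forall>y z. adj E y z \<and> y \<noteq> v \<and> z \<noteq> v \<longrightarrow> adj E' y z"
        using keep0 adj_mono[OF _ rmE'] by blast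
      have nbc: "\<forall>x\<in>nb E v. \<forall>y\<in>nb E v. (adj E')\<^sup>*\<^sup>* x y"
        using adjab adj_sym[of E' a b] nbv by auto
      have oriE': "\<forall>(u,w)\<in>E'. u<w \<and> u\<in>V-{v} \<and> w\<in>V-{v}"
        using orirm aV av ab by (auto simp: E'_def ab'_def min_def max_def)
      obtain e1 where e1: "e1 \<in> E" "e1 = (v,a) \<or> e1 = (a,v)" using va by (auto simp: adj_def)
      obtain e2 where e2: "e2 \<in> E" "e2 = (v,b) \<or> e2 = (b,v)" using vb by (auto simp: adj_def)
      have acE': "acyclic_graph E'"
        unfolding acyclic_graph_def
      proof
        assume "\<exists>cs. is_cycle E' cs"
        then obtain cs where "is_cycle E' cs" by blast
        then obtain c d where cd: "(c,d) \<in> E'" and p: "(adj (E' - {(c,d)}))\<^sup>*\<^sup>* c d"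
          using L3 by blast
        show False
        proof (cases "(c,d) = ab'")
          case True
          have sub1: "E' - {(c,d)} \<subseteq> rm E v" using True by (auto simp: E'_def)
          have pmono: "(adj (rm E v))\<^sup>*\<^sup>* c d"
            using rtranclp_lift[of "adj (E' - {(c,d)})" "adj (rm E v)", OF _ p] adj_mono[OF _ sub1] by blast
          have "(adj (rm E v))\<^sup>*\<^sup>* a b"
          proof (cases "a < b")
            case True
            then show ?thesis using pmono \<open>(c,d) = ab'\<close> by (simp add: ab'_def)
          next
            case False
            then have "(adj (rm E v))\<^sup>*\<^sup>* b a" using pmono \<open>(c,d) = ab'\<close> by (simp add: ab'_def)
            then show ?thesis using rtranclp_adj_sym by blast
          qed
          moreover have "rm E v \<subseteq> E - {e1}" using e1 by (auto simp: rm_def)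
          ultimately have p1: "(adj (E - {e1}))\<^sup>*\<^sup>* a b"
            using rtranclp_lift[of "adj (rm E v)" "adj (E - {e1})"] adj_mono by blast
          have "adj (E - {e1}) b v" using e1 e2 ab by (auto simp: adj_def)
          then have p2: "(adj (E - {e1}))\<^sup>*\<^sup>* a v" using p1 by (meson rtranclp.rtrancl_into_rtrancl)
          show False
          proof (cases "e1 = (v,a)")
            case True
            then show False using L2[OF acyc ori2, of v a] e1 p2 rtranclp_adj_sym by metis
          next
            case False
            then have "e1 = (a,v)" using e1 by simp
            then show False using L2[OF acyc ori2, of a v] e1 p2 by metis
          qed
        next
          case False
          then have cdE: "(c,d) \<in> rm E v" using cd by (simp add: E'_def)
          then have cdv: "c \<noteq> v" "d \<noteq> v" "(c,d) \<in> E" by (auto simp: rm_def)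
          have step: "(adj (E - {(c,d)}))\<^sup>*\<^sup>* y z" if "adj (E' - {(c,d)}) y z" for y z
          proof (cases "(y,z) = ab' \<or> (z,y) = ab'")
            case True
            then have yz: "(y = a \<and> z = b) \<or> (y = b \<and> z = a)"
              by (auto simp: ab'_def min_def max_def split: if_splits)
            have "adj (E - {(c,d)}) a v" "adj (E - {(c,d)}) v b"
              "adj (E - {(c,d)}) b v" "adj (E - {(c,d)}) v a"
              using e1 e2 cdv by (auto simp: adj_def)
            then show ?thesis using yz
              by (meson converse_rtranclp_into_rtranclp rtranclp.rtrancl_refl)
          next
            case False
            then have "adj (rm E v - {(c,d)}) y z" using that by (auto simp: adj_def E'_def)
            moreover have "rm E v - {(c,d)} \<subseteq> E - {(c,d)}" by (auto simp: rm_def)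
            ultimately show ?thesis using adj_mono by blast
          qed
          have "(adj (E - {(c,d)}))\<^sup>*\<^sup>* c d" using rtranclp_lift[OF step p] .
          then show False using L2[OF acyc ori2 cdv(3)] by blast
        qed
      qed
      have "is_tree (V - {v}) E'"
        unfolding is_tree_def
      proof (intro conjI)
        show "connected_graph (V - {v}) E'"
          using conn_remove[OF conn v keep nbc] .
      qed (use finV' neV' oriE' acE' in auto)
      then have t: "tree_on n (V - {v}) E' lab" using labV' inj by (simp add: tree_on_def)
      have H: "g ab' = hamming m (f a) (f b)"
        by (simp add: g_def ab'_def min_def max_def hamming_sym)
      have g1: "g e1 = hamming m (f v) (f a)" using e1 by (auto simp: g_def hamming_sym)
      have g2: "g e2 = hamming m (f v) (f b)" using e2 by (auto simp: g_def hamming_sym)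
      have e12: "e1 \<noteq> e2" using e1 e2 ab av by auto
      have finrm: "finite (rm E v)" using finite_subset[OF rm_sub finE] .
      have c1: "sum g E' \<le> sum g (rm E v) + g ab'"
        unfolding E'_def using finrm by (simp add: sum.insert_if)
      have c2: "sum g E = sum g (E - rm E v) + sum g (rm E v)"
        using sum.subset_diff[OF rm_sub finE] .
      have "{e1, e2} \<subseteq> E - rm E v" using e1 e2 by (auto simp: rm_def)
      then have "sum g {e1, e2} \<le> sum g (E - rm E v)"
        by (intro sum_mono2) (use finE in auto)
      then have c3: "g e1 + g e2 \<le> sum g (E - rm E v)" using e12 by simp
      have c4: "hamming m (f a) (f b) \<le> hamming m (f v) (f a) + hamming m (f v) (f b)"
        using hamming_tri[of m "f a" "f b" "f v"] hamming_sym[of m "f a" "f v"] by simp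
      have X: "g ab' \<le> g e1 + g e2" using c4 unfolding H g1 g2 .
      have "sum g E' \<le> sum g E" using c1 c2 c3 X by linarith
      then have "fit_cost m E' f \<le> fit_cost m E f" unfolding fcg .
      then have "card V \<le> card (V - {v})" using reduce[OF t] by simp
      then show False using cV' by simp
    qed
  qed

  have hs: "(\<Sum>v\<in>V. card (nb E v)) = 2 * card E" using handshake[OF finV ori] .
  have fb: "card E \<le> card V - 1" using forest[OF finV ori acyc] .
  define U where "U = V - L"
  have cU: "card V = n + card U" using card_Diff_subset[OF finite_subset[OF LV finV] LV] cardL card_mono[OF finV LV]
    by (simp add: U_def)
  have ssplit: "(\<Sum>v\<in>V. card (nb E v)) = (\<Sum>v\<in>U. card (nb E v)) + (\<Sum>v\<in>L. card (nb E v))"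
    unfolding U_def using sum.subset_diff[OF LV finV] .
  have sL: "n \<le> (\<Sum>v\<in>L. card (nb E v))"
  proof -
    have "(\<Sum>v\<in>L. (1::nat)) \<le> (\<Sum>v\<in>L. card (nb E v))" using deg1 LV by (intro sum_mono) auto
    then show ?thesis using cardL by simp
  qed
  have sU: "3 * card U \<le> (\<Sum>v\<in>U. card (nb E v))"
  proof -
    have "(\<Sum>v\<in>U. (3::nat)) \<le> (\<Sum>v\<in>U. card (nb E v))" using deg3 by (intro sum_mono) (auto simp: U_def)
    then show ?thesis by simp
  qed
  have "card U \<le> n - 2" using hs fb cU ssplit sL sU assms(1) by linarith
  then show ?thesis unfolding U_def L_def .
qed

end
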